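(* Let $t_{\mathrm m},t_{\mathrm b}\ge 1$, $t_{\mathrm{msg}}\ge 0$ and $t_{\mathrm{cut}}$ be integers with $t_{\mathrm{cut}}>\max\{t_{\mathrm m},t_{\mathrm b},t_{\mathrm{msg}}\}$, and let $p_{\mathrm m},p_{\mathrm b}\in(0,1)$. Let $M_1,M_2,M_b$ be independent random variables with $\mathbb P(M_1=j)=\mathbb P(M_2=j)=p_{\mathrm m}(1-p_{\mathrm m})^{j-1}$ and $\mathbb P(M_b=j)=p_{\mathrm b}(1-p_{\mathrm b})^{j-1}$ for $j\in\{1,2,\dots\}$, and put $X_1=t_{\mathrm m}M_1$, $X_2=t_{\mathrm m}M_2$, $X_b=t_{\mathrm b}M_b$, $X_{\max}=\max\{X_1,X_2,X_b\}$, $X_{\min}=\min\{X_1,X_2,X_b\}$. Let $Y=1$ if $X_{\max}-X_{\min}<t_{\mathrm{cut}}$ and $Y=0$ otherwise, let $p=\mathbb P(Y=1)$, and let $$Z=\begin{cases}X_{\max}+t_{\mathrm{msg}}, & Y=1,\\ X_{\min}+t_{\mathrm{cut}}, & Y=0.\end{cases}$$ Let $(Y^{(i)},Z^{(i)})_{i\ge1}$ be i.i.d. copies of $(Y,Z)$, let $N=\min\{i\ge1: Y^{(i)}=1\}$ and $X_{\mathrm{e2e}}=\sum_{i=1}^{N}Z^{(i)}$. For $i,j\in\{1,2,b\}$ define the events $A_i^+=\{X_{\max}=X_i,\ X_{\max}-X_{\min}<t_{\mathrm{cut}}\}$, $A_i^-=\{X_{\max}=X_i,\ X_{\max}-X_{\min}\ge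 t_{\mathrm{cut}}\}$, $A_{ij}^-=\{X_{\max}=X_i,\ X_{\min}=X_j,\ X_{\max}-X_{\min}\ge t_{\mathrm{cut}}\}$, and write juxtaposition of events for their intersection (e.g. $A_1^+A_2^+=A_1^+\cap A_2^+$, $A_{12}^-A_{1b}^-=A_{12}^-\cap A_{1b}^-$). Then $$\mathbb E(X_{\mathrm{e2e}})=\frac{\mathbb E(Z\mathbf 1_{Y=0})+\mathbb E(Z\mathbf 1_{Y=1})}{p},$$ where $$\mathbb E(Z\mathbf 1_{Y=1})=2\mathbb E(Z\mathbf 1_{A_1^+})+\mathbb E(Z\mathbf 1_{A_b^+})-\mathbb E(Z\mathbf 1_{A_1^+A_2^+})-2\mathbb E(Z\mathbf 1_{A_1^+A_b^+})+\mathbb E(Z\mathbf 1_{A_1^+A_2^+A_b^+}),$$ $$\mathbb E(Z\mathbf 1_{Y=0})=2\big(\mathbb E(Z\mathbf 1_{A_{12}^-})+\mathbb E(Z\mathbf 1_{A_{1b}^-})+\mathbb E(Z\mathbf 1_{A_{b1}^-})\big)-2\mathbb E(Z\mathbf 1_{A_{12}^-A_{1b}^-})-\mathbb E(Z\mathbf 1_{A_{b1}^-A_{b2}^-})-\mathbb E(Z\mathbf 1_{A_1^-A_2^-})-2\mathbb E(Z\mathbf 1_{A_1^-A_b^-}).$$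
   Context: This models end-to-end entanglement generation in a chain of three elementary links (two identical metropolitan links 1, 2 and a backbone link b) with a global cut-off: in each round, $X_1,X_2,X_b$ are the times at which the three elementary links are first generated; the round succeeds ($Y=1$) iff all three are generated within a window shorter than $t_{\mathrm{cut}}$; a successful round lasts $X_{\max}+t_{\mathrm{msg}}$ and a failed round lasts $X_{\min}+t_{\mathrm{cut}}$; rounds are repeated independently until the first success, and $X_{\mathrm{e2e}}$ is the total time until a successful end-to-end link. *)

theory Defs
  imports "HOL-Probability.Probability"
begin

datatype link = L1 | L2 | Lb

text \<open>One round is described by the triple (M1, M2, Mb) of attempt counts.
  X_i = t_m M_i (i = 1,2), X_b = t_b M_b.\<close>
definition Xl :: "nat \<Rightarrow> nat \<Rightarrow> link \<Rightarrow> nat \<times> nat \<times> nat \<Rightarrow> real" where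
  "Xl tm tb l \<omega> = (case \<omega> of (m1, m2, mb) \<Rightarrow>
     (case l of L1 \<Rightarrow> real tm * real m1 | L2 \<Rightarrow> real tm * real m2 | Lb \<Rightarrow> real tb * real mb))"

definition Xmax :: "nat \<Rightarrow> nat \<Rightarrow> nat \<times> nat \<times> nat \<Rightarrow> real" where
  "Xmax tm tb \<omega> = max (Xl tm tb L1 \<omega>) (max (Xl tm tb L2 \<omega>) (Xl tm tb Lb \<omega>))"

definition Xmin :: "nat \<Rightarrow> nat \<Rightarrow> nat \<times> nat \<times> nat \<Rightarrow> real" where
  "Xmin tm tb \<omega> = min (Xl tm tb L1 \<omega>) (min (Xl tm tb L2 \<omega>) (Xl tm tb Lb \<omega>))"

definition Yr :: "nat \<Rightarrow> nat \<Rightarrow> nat \<Rightarrow> nat \<times> nat \<times> nat \<Rightarrow> bool" where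
  "Yr tm tb tcut \<omega> \<longleftrightarrow> Xmax tm tb \<omega> - Xmin tm tb \<omega> < real tcut"

definition Zr :: "nat \<Rightarrow> nat \<Rightarrow> nat \<Rightarrow> nat \<Rightarrow> nat \<times> nat \<times> nat \<Rightarrow> real" where
  "Zr tm tb tmsg tcut \<omega> =
     (if Yr tm tb tcut \<omega> then Xmax tm tb \<omega> + real tmsg else Xmin tm tb \<omega> + real tcut)"

definition Aplus :: "nat \<Rightarrow> nat \<Rightarrow> nat \<Rightarrow> link \<Rightarrow> (nat \<times> nat \<times> nat) set" where
  "Aplus tm tb tcut i = {\<omega>. Xmax tm tb \<omega> = Xl tm tb i \<omega> \<and> Xmax tm tb \<omega> - Xmin tm tb \<omega> < real tcut}"

definition Aminus :: "nat \<Rightarrow> nat \<Rightarrow> nat \<Rightarrow> link \<Rightarrow> (nat \<times> nat \<times> nat) set" where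
  "Aminus tm tb tcut i = {\<omega>. Xmax tm tb \<omega> = Xl tm tb i \<omega> \<and> Xmax tm tb \<omega> - Xmin tm tb \<omega> \<ge> real tcut}"

definition Aminus2 :: "nat \<Rightarrow> nat \<Rightarrow> nat \<Rightarrow> link \<Rightarrow> link \<Rightarrow> (nat \<times> nat \<times> nat) set" where
  "Aminus2 tm tb tcut i j = {\<omega>. Xmax tm tb \<omega> = Xl tm tb i \<omega> \<and> Xmin tm tb \<omega> = Xl tm tb j \<omega>
      \<and> Xmax tm tb \<omega> - Xmin tm tb \<omega> \<ge> real tcut}"

text \<open>Given an i.i.d. sequence of rounds (a stream, index 0 = first round),
  N is the index of the first successful round and X_e2e the sum of the
  durations of rounds 0..N.\<close>
definition first_success :: "nat \<Rightarrow> nat \<Rightarrow> nat \<Rightarrow> (nat \<times> nat \<times> nat) stream \<Rightarrow> nat" where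
  "first_success tm tb tcut \<omega> = (LEAST i. Yr tm tb tcut (\<omega> !! i))"

definition Xe2e :: "nat \<Rightarrow> nat \<Rightarrow> nat \<Rightarrow> nat \<Rightarrow> (nat \<times> nat \<times> nat) stream \<Rightarrow> real" where
  "Xe2e tm tb tmsg tcut \<omega> = (\<Sum>i\<le>first_success tm tb tcut \<omega>. Zr tm tb tmsg tcut (\<omega> !! i))"

end

theory Submission imports Defs begin
lemma renewal:
  fixes P :: "'a pmf" and Y :: "'a \<Rightarrow> bool" and Z :: "'a \<Rightarrow> real"
  assumes Zpos: "\<And>x. Z x \<ge> 0" and Zint: "integrable P Z"
    and ppos: "measure_pmf.prob P {x. Y x} > 0"
  shows "(\<integral>\<omega>. (\<Sum>i\<le>(LEAST i. Y (\<omega> !! i)). Z (\<omega> !! i)) \<partial>stream_space (measure_pmf P))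
          = (\<integral>x. Z x \<partial>P) / measure_pmf.prob P {x. Y x}"
proof -
  define S where "S = stream_space (measure_pmf P)"
  define p where "p = measure_pmf.prob P {x. Y x}"
  define q where "q = 1 - p"
  define EZ where "EZ = (\<integral>x. Z x \<partial>P)"
  interpret S: prob_space S unfolding S_def
    by (rule prob_space.prob_space_stream_space[OF prob_space_measure_pmf])
  have nis: "\<And>f. f \<in> borel_measurable S \<Longrightarrow> (\<integral>\<^sup>+X. f X \<partial>S) = (\<integral>\<^sup>+x. (\<integral>\<^sup>+X. f (x ## X) \<partial>S) \<partial>P)"
    unfolding S_def by (rule prob_space.nn_integral_stream_space[OF prob_space_measure_pmf])
  have p1: "p \<le> 1" unfolding p_def by simp
  have q01: "0 \<le> q" "q < 1" using p1 ppos unfolding q_def p_def by auto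
  have EZ0: "EZ \<ge> 0" unfolding EZ_def using Zpos by simp
  have compl: "emeasure P {x. \<not> Y x} = ennreal q"
  proof -
    have "measure_pmf.prob P {x. \<not> Y x} = 1 - p"
      unfolding p_def using measure_pmf.prob_compl[of "{x. Y x}" P]
      by (simp add: set_diff_eq)
    then show ?thesis unfolding q_def by (simp add: measure_pmf.emeasure_eq_measure)
  qed
  have measZ[measurable]: "\<And>i. (\<lambda>\<omega>. Z (\<omega> !! i)) \<in> borel_measurable S"
    unfolding S_def by (rule measurable_compose[OF measurable_snth]) simp
  have measY[measurable]: "\<And>i. (\<lambda>\<omega>. Y (\<omega> !! i)) \<in> measurable S (count_space UNIV)"
    unfolding S_def by (rule measurable_compose[OF measurable_snth]) simp
  define u where "u i \<omega> = (if (\<forall>k<i. \<not> Y (\<omega> !! k)) then Z (\<omega> !! i) else 0)" for i \<omega>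
  have measu[measurable]: "\<And>i. u i \<in> borel_measurable S"
    unfolding u_def by measurable
  have stepA: "(\<integral>\<^sup>+\<omega>. ennreal (u i \<omega>) \<partial>S) = ennreal (q ^ i * EZ)" for i
  proof (induction i)
    case 0
    have "(\<integral>\<^sup>+\<omega>. ennreal (u 0 \<omega>) \<partial>S) = (\<integral>\<^sup>+x. (\<integral>\<^sup>+X. ennreal (u 0 (x ## X)) \<partial>S) \<partial>P)"
      by (rule nis) measurable
    also have "\<dots> = (\<integral>\<^sup>+x. ennreal (Z x) \<partial>P)"
      by (simp add: u_def S.emeasure_space_1)
    also have "\<dots> = ennreal EZ" unfolding EZ_def
      by (rule nn_integral_eq_integral[OF Zint]) (simp add: Zpos)
    finally show ?case by simp
  next
    case (Suc i)
    have "(\<integral>\<^sup>+\<omega>. ennreal (u (Suc i) \<omega>) \<partial>S) = (\<integral>\<^sup>+x. (\<integral>\<^sup>+X. ennreal (u (Suc i) (x ## X)) \<partial>S) \<partial>P)"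
      by (rule nis) measurable
    also have "\<dots> = (\<integral>\<^sup>+x. indicator {x. \<not> Y x} x * (\<integral>\<^sup>+X. ennreal (u i X) \<partial>S) \<partial>P)"
    proof (intro nn_integral_cong)
      fix x
      have "u (Suc i) (x ## X) = (if Y x then 0 else u i X)" for X
        unfolding u_def by (auto simp: less_Suc_eq_0_disj)
      then show "(\<integral>\<^sup>+X. ennreal (u (Suc i) (x ## X)) \<partial>S) = indicator {x. \<not> Y x} x * (\<integral>\<^sup>+X. ennreal (u i X) \<partial>S)"
        by (simp add: indicator_def)
    qed
    also have "\<dots> = emeasure P {x. \<not> Y x} * ennreal (q ^ i * EZ)"
      by (simp add: Suc nn_integral_multc)
    also have "\<dots> = ennreal (q ^ Suc i * EZ)"
      using q01 EZ0 by (simp add: compl ennreal_mult[symmetric])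
    finally show ?case .
  qed
  define h where "h \<omega> = (\<Sum>i. ennreal (u i \<omega>))" for \<omega>
  have sumq: "(\<lambda>i. q ^ i * EZ) sums (EZ / p)"
  proof -
    have "(\<lambda>i. q ^ i) sums (1 / (1 - q))" using q01 by (intro geometric_sums) simp
    then have "(\<lambda>i. q ^ i * EZ) sums (1 / (1 - q) * EZ)" by (rule sums_mult2)
    then show ?thesis unfolding q_def by simp
  qed
  have stepB: "(\<integral>\<^sup>+\<omega>. h \<omega> \<partial>S) = ennreal (EZ / p)"
  proof -
    have "(\<integral>\<^sup>+\<omega>. h \<omega> \<partial>S) = (\<Sum>i. \<integral>\<^sup>+\<omega>. ennreal (u i \<omega>) \<partial>S)"
      unfolding h_def by (rule nn_integral_suminf) measurable
    also have "\<dots> = (\<Sum>i. ennreal (q ^ i * EZ))" by (simp add: stepA)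
    also have "\<dots> = ennreal (\<Sum>i. q ^ i * EZ)"
      using sumq q01 EZ0 by (intro suminf_ennreal2) (auto simp: sums_iff)
    finally show ?thesis using sumq by (simp add: sums_iff)
  qed
  define F where "F = {\<omega>\<in>space S. \<forall>i. \<not> Y (\<omega> !! i)}"
  have Fmeas[measurable]: "F \<in> sets S" unfolding F_def by measurable
  have "emeasure S F = (\<integral>\<^sup>+t. emeasure S {x\<in>space S. t ## x \<in> F} \<partial>P)"
    unfolding S_def by (rule prob_space.emeasure_stream_space[OF prob_space_measure_pmf])
      (use Fmeas in \<open>simp add: F_def S_def\<close>)
  also have "\<dots> = (\<integral>\<^sup>+t. indicator {x. \<not> Y x} t * emeasure S F \<partial>P)"
  proof (intro nn_integral_cong)
    fix t
    have "{x\<in>space S. t ## x \<in> F} = (if Y t then {} else F)"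
    proof -
      have e: "(\<forall>i. \<not> Y ((t ## x) !! i)) = (\<not> Y t \<and> (\<forall>i. \<not> Y (x !! i)))" for x
      proof
        assume a: "\<forall>i. \<not> Y ((t ## x) !! i)"
        have "\<not> Y (x !! i)" for i using spec[OF a, of "Suc i"] by simp
        then show "\<not> Y t \<and> (\<forall>i. \<not> Y (x !! i))" using spec[OF a, of 0] by simp
      next
        assume b: "\<not> Y t \<and> (\<forall>i. \<not> Y (x !! i))"
        show "\<forall>i. \<not> Y ((t ## x) !! i)"
        proof
          fix i show "\<not> Y ((t ## x) !! i)" using b by (cases i) auto
        qed
      qed
      have sp: "space S = UNIV" by (simp add: S_def space_stream_space)
      show ?thesis unfolding F_def sp by (cases "Y t") (simp_all add: e)
    qed
    then show "emeasure S {x\<in>space S. t ## x \<in> F} = indicator {x. \<not> Y x} t * emeasure S F"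
      by (simp add: indicator_def)
  qed
  also have "\<dots> = ennreal q * emeasure S F"
    by (simp add: nn_integral_multc compl)
  finally have Feq: "emeasure S F = ennreal q * emeasure S F" .
  have F0: "emeasure S F = 0"
  proof -
    have "ennreal (measure S F) = ennreal (q * measure S F)"
      using Feq q01 by (simp add: S.emeasure_eq_measure ennreal_mult)
    then have "measure S F = q * measure S F" using q01 by (subst (asm) ennreal_inj) auto
    then have "(1 - q) * measure S F = 0" by (simp add: algebra_simps)
    then have "measure S F = 0" using q01 by simp
    then show ?thesis by (simp add: S.emeasure_eq_measure)
  qed
  have AEsucc: "AE \<omega> in S. \<exists>i. Y (\<omega> !! i)"
  proof (subst AE_iff_null)
    show "{x \<in> space S. \<not> (\<exists>i. Y (x !! i))} \<in> sets S" by measurable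
    show "{x \<in> space S. \<not> (\<exists>i. Y (x !! i))} \<in> null_sets S"
      using F0 Fmeas unfolding F_def by auto
  qed
  define X where "X \<omega> = (\<Sum>i\<le>(LEAST i. Y (\<omega> !! i)). Z (\<omega> !! i))" for \<omega>
  have stepD: "AE \<omega> in S. h \<omega> = ennreal (X \<omega>)"
    using AEsucc
  proof (rule AE_mp, intro AE_I2 impI)
    fix \<omega> assume ex: "\<exists>i. Y (\<omega> !! i)"
    define N where "N = (LEAST i. Y (\<omega> !! i))"
    have YN: "Y (\<omega> !! N)" unfolding N_def using ex by (rule LeastI_ex)
    have ue: "u i \<omega> = (if i \<le> N then Z (\<omega> !! i) else 0)" for i
    proof (cases "i \<le> N")
      case True
      have "\<not> Y (\<omega> !! k)" if "k < i" for k
        using not_less_Least[of k "\<lambda>i. Y (\<omega> !! i)"] True that unfolding N_def by simp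
      then have "\<forall>k<i. \<not> Y (\<omega> !! k)" by blast
      then show ?thesis using True by (simp add: u_def)
    next
      case False
      then show ?thesis using YN by (auto simp: u_def)
    qed
    have "h \<omega> = (\<Sum>i\<le>N. ennreal (u i \<omega>))"
      unfolding h_def by (rule suminf_finite) (auto simp: ue)
    also have "\<dots> = (\<Sum>i\<le>N. ennreal (Z (\<omega> !! i)))" by (simp add: ue)
    also have "\<dots> = ennreal (X \<omega>)" unfolding X_def N_def[symmetric] using Zpos by simp
    finally show "h \<omega> = ennreal (X \<omega>)" .
  qed
  have measX: "X \<in> borel_measurable S"
  proof -
    have "(\<lambda>\<omega>. (\<lambda>n \<omega>. \<Sum>i\<le>n. Z (\<omega> !! i)) (LEAST i. Y (\<omega> !! i)) \<omega>) \<in> borel_measurable S"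
      by (rule measurable_compose_countable'[where I=UNIV]) auto
    then show ?thesis unfolding X_def by simp
  qed
  have "integral\<^sup>L S X = enn2real (\<integral>\<^sup>+\<omega>. ennreal (X \<omega>) \<partial>S)"
    by (rule integral_eq_nn_integral[OF measX]) (simp add: X_def Zpos sum_nonneg)
  also have "\<dots> = enn2real (\<integral>\<^sup>+\<omega>. h \<omega> \<partial>S)"
    using stepD by (simp add: nn_integral_cong_AE)
  also have "\<dots> = EZ / p" using stepB EZ0 ppos by (simp add: p_def)
  finally show ?thesis unfolding X_def S_def EZ_def p_def .
qed
lemma geom_shift:
  fixes q :: "nat pmf" and r :: real
  assumes "0 < r" "r < 1" "\<And>j. pmf q j = (if j \<ge> 1 then r * (1 - r) ^ (j - 1) else 0)"
  shows "integrable q real"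
proof -
  have eq: "q = map_pmf Suc (geometric_pmf r)"
  proof (rule pmf_eqI)
    fix j show "pmf q j = pmf (map_pmf Suc (geometric_pmf r)) j"
    proof (cases j)
      case 0
      have "pmf (map_pmf Suc (geometric_pmf r)) 0 = 0"
        by (rule pmf_map_outside) auto
      then show ?thesis using 0 assms(3) by simp
    next
      case (Suc k)
      have "pmf (geometric_pmf r) k = (1 - r) ^ k * r" using assms(1,2) by simp
      then show ?thesis using assms(3)[of j] Suc by (simp add: pmf_map_inj' mult.commute)
    qed
  qed
  have "integrable (geometric_pmf r) (\<lambda>x. 1 + real x)"
    using integrable_real_geometric_pmf[of r] assms by (intro Bochner_Integration.integrable_add) auto
  then show ?thesis unfolding eq by (simp add: integrable_map_pmf_eq)
qed

lemma Zr_nonneg: "Zr tm tb tmsg tcut \<omega> \<ge> 0"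
proof (cases \<omega>)
  case (fields a b c)
  have "0 \<le> real tm * real a" "0 \<le> real tm * real b" "0 \<le> real tb * real c" by auto
  then show ?thesis using fields by (auto simp: Zr_def Xmax_def Xmin_def Xl_def max_def min_def)
qed

lemma Zr_bound: "Zr tm tb tmsg tcut \<omega> \<le> real tm * real (fst \<omega>) + real tm * real (fst (snd \<omega>)) + real tb * real (snd (snd \<omega>)) + real tmsg + real tcut"
proof (cases \<omega>)
  case (fields a b c)
  have "0 \<le> real tm * real a" "0 \<le> real tm * real b" "0 \<le> real tb * real c" by auto
  then show ?thesis using fields by (auto simp: Zr_def Xmax_def Xmin_def Xl_def max_def min_def)
qed

lemma Zr_integrable:
  fixes qm qb :: "nat pmf"
  assumes "integrable qm real" "integrable qb real"
  shows "integrable (pair_pmf qm (pair_pmf qm qb)) (Zr tm tb tmsg tcut)"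
proof -
  let ?P = "pair_pmf qm (pair_pmf qm qb)"
  have i1: "integrable ?P (\<lambda>\<omega>. real (fst \<omega>))"
    using assms(1) by (metis integrable_map_pmf_eq map_fst_pair_pmf)
  have i2: "integrable ?P (\<lambda>\<omega>. real (fst (snd \<omega>)))"
  proof -
    have "integrable (map_pmf snd ?P) (\<lambda>\<omega>. real (fst \<omega>))"
      using assms(1) by (simp add: map_snd_pair_pmf) (metis integrable_map_pmf_eq map_fst_pair_pmf)
    then show ?thesis by simp
  qed
  have i3: "integrable ?P (\<lambda>\<omega>. real (snd (snd \<omega>)))"
  proof -
    have "integrable (map_pmf snd ?P) (\<lambda>\<omega>. real (snd \<omega>))"
      using assms(2) by (simp add: map_snd_pair_pmf) (metis integrable_map_pmf_eq map_snd_pair_pmf)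
    then show ?thesis by simp
  qed
  have "integrable ?P (\<lambda>\<omega>. real tm * real (fst \<omega>) + real tm * real (fst (snd \<omega>)) + real tb * real (snd (snd \<omega>)) + real tmsg + real tcut)"
    using i1 i2 i3 by (intro Bochner_Integration.integrable_add Bochner_Integration.integrable_mult_right) auto
  then show ?thesis
    by (rule Bochner_Integration.integrable_bound) (auto intro!: always_eventually simp: Zr_nonneg Zr_bound)
qed

definition sw :: "nat \<times> nat \<times> nat \<Rightarrow> nat \<times> nat \<times> nat" where
  "sw \<omega> = (case \<omega> of (a, b, c) \<Rightarrow> (b, a, c))"

fun lsw :: "link \<Rightarrow> link" where
  "lsw L1 = L2" | "lsw L2 = L1" | "lsw Lb = Lb"

lemma sw_sw[simp]: "sw (sw \<omega>) = \<omega>" by (cases \<omega>) (simp add: sw_def)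
lemma inj_sw: "inj sw" by (metis injI sw_sw)

lemma pmf_swap: "map_pmf sw (pair_pmf q (pair_pmf q r)) = pair_pmf q (pair_pmf q r)"
proof (rule pmf_eqI)
  fix x :: "nat \<times> nat \<times> nat"
  obtain a b c where x: "x = (a, b, c)" by (cases x) auto
  have "pmf (map_pmf sw (pair_pmf q (pair_pmf q r))) (sw (b, a, c)) = pmf (pair_pmf q (pair_pmf q r)) (b, a, c)"
    by (rule pmf_map_inj'[OF inj_sw])
  then show "pmf (map_pmf sw (pair_pmf q (pair_pmf q r))) x = pmf (pair_pmf q (pair_pmf q r)) x"
    by (simp add: x sw_def pmf_pair)
qed

lemma Xl_sw: "Xl tm tb l (sw \<omega>) = Xl tm tb (lsw l) \<omega>"
  by (cases \<omega>; cases l) (auto simp: Xl_def sw_def)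
lemma Xmax_sw: "Xmax tm tb (sw \<omega>) = Xmax tm tb \<omega>"
  unfolding Xmax_def Xl_sw by simp
lemma Xmin_sw: "Xmin tm tb (sw \<omega>) = Xmin tm tb \<omega>"
  unfolding Xmin_def Xl_sw by simp
lemma Zr_sw: "Zr tm tb tmsg tcut (sw \<omega>) = Zr tm tb tmsg tcut \<omega>"
  unfolding Zr_def Yr_def Xmax_sw Xmin_sw ..
lemma Aplus_sw: "sw -` Aplus tm tb tcut l = Aplus tm tb tcut (lsw l)"
  unfolding Aplus_def by (auto simp: Xmax_sw Xmin_sw Xl_sw)
lemma Aminus_sw: "sw -` Aminus tm tb tcut l = Aminus tm tb tcut (lsw l)"
  unfolding Aminus_def by (auto simp: Xmax_sw Xmin_sw Xl_sw)
lemma Aminus2_sw: "sw -` Aminus2 tm tb tcut l l' = Aminus2 tm tb tcut (lsw l) (lsw l')"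
  unfolding Aminus2_def by (auto simp: Xmax_sw Xmin_sw Xl_sw)

lemma sym_E:
  "(\<integral>\<omega>. Zr tm tb tmsg tcut \<omega> * indicator A \<omega> \<partial>pair_pmf q (pair_pmf q r))
   = (\<integral>\<omega>. Zr tm tb tmsg tcut \<omega> * indicator (sw -` A) \<omega> \<partial>pair_pmf q (pair_pmf q r))"
proof -
  have "(\<integral>\<omega>. Zr tm tb tmsg tcut \<omega> * indicator A \<omega> \<partial>pair_pmf q (pair_pmf q r))
     = (\<integral>\<omega>. Zr tm tb tmsg tcut \<omega> * indicator A \<omega> \<partial>map_pmf sw (pair_pmf q (pair_pmf q r)))"
    by (simp only: pmf_swap)
  also have "\<dots> = (\<integral>\<omega>. Zr tm tb tmsg tcut (sw \<omega>) * indicator A (sw \<omega>) \<partial>pair_pmf q (pair_pmf q r))"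
    by simp
  also have "\<dots> = (\<integral>\<omega>. Zr tm tb tmsg tcut \<omega> * indicator (sw -` A) \<omega> \<partial>pair_pmf q (pair_pmf q r))"
    by (simp add: Zr_sw indicator_def)
  finally show ?thesis .
qed

lemma ind2:
  "indicator {\<omega>. Yr tm tb tcut \<omega>} \<omega> =
     (indicator (Aplus tm tb tcut L1) \<omega> + indicator (Aplus tm tb tcut L2) \<omega> + indicator (Aplus tm tb tcut Lb) \<omega>
     - indicator (Aplus tm tb tcut L1 \<inter> Aplus tm tb tcut L2) \<omega> - indicator (Aplus tm tb tcut L1 \<inter> Aplus tm tb tcut Lb) \<omega>
     - indicator (Aplus tm tb tcut L2 \<inter> Aplus tm tb tcut Lb) \<omega>
     + indicator (Aplus tm tb tcut L1 \<inter> Aplus tm tb tcut L2 \<inter> Aplus tm tb tcut Lb) \<omega> :: real)"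
  unfolding Aplus_def Yr_def Xmax_def Xmin_def indicator_def
  by (auto simp: max_def min_def)

lemma ind3:
  assumes "tcut > 0"
  shows "indicator {\<omega>. \<not> Yr tm tb tcut \<omega>} \<omega> =
     (indicator (Aminus2 tm tb tcut L1 L2) \<omega> + indicator (Aminus2 tm tb tcut L2 L1) \<omega>
     + indicator (Aminus2 tm tb tcut L1 Lb) \<omega> + indicator (Aminus2 tm tb tcut L2 Lb) \<omega>
     + indicator (Aminus2 tm tb tcut Lb L1) \<omega> + indicator (Aminus2 tm tb tcut Lb L2) \<omega>
     - indicator (Aminus2 tm tb tcut L1 L2 \<inter> Aminus2 tm tb tcut L1 Lb) \<omega>
     - indicator (Aminus2 tm tb tcut L2 L1 \<inter> Aminus2 tm tb tcut L2 Lb) \<omega>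
     - indicator (Aminus2 tm tb tcut Lb L1 \<inter> Aminus2 tm tb tcut Lb L2) \<omega>
     - indicator (Aminus tm tb tcut L1 \<inter> Aminus tm tb tcut L2) \<omega>
     - indicator (Aminus tm tb tcut L1 \<inter> Aminus tm tb tcut Lb) \<omega>
     - indicator (Aminus tm tb tcut L2 \<inter> Aminus tm tb tcut Lb) \<omega> :: real)"
  using assms unfolding Aminus_def Aminus2_def Yr_def Xmax_def Xmin_def indicator_def
  by (auto simp: max_def min_def)

theorem mainTheorem1:
  fixes tm tb tmsg tcut :: nat and pm pb :: real and qm qb :: "nat pmf"
  assumes "tm \<ge> 1" and "tb \<ge> 1" and "tcut > max tm (max tb tmsg)"
    and "0 < pm" and "pm < 1" and "0 < pb" and "pb < 1"
    and "\<And>j. pmf qm j = (if j \<ge> 1 then pm * (1 - pm) ^ (j - 1) else 0)"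
    and "\<And>j. pmf qb j = (if j \<ge> 1 then pb * (1 - pb) ^ (j - 1) else 0)"
  defines "p \<equiv> measure_pmf.prob (pair_pmf qm (pair_pmf qm qb)) {\<omega>. Yr tm tb tcut \<omega>}"
    and "E \<equiv> \<lambda>A. measure_pmf.expectation (pair_pmf qm (pair_pmf qm qb)) (\<lambda>\<omega>. Zr tm tb tmsg tcut \<omega> * indicator A \<omega>)"
    and "Ap \<equiv> Aplus tm tb tcut"
    and "Am \<equiv> Aminus tm tb tcut"
    and "Amm \<equiv> Aminus2 tm tb tcut"
  shows "(\<integral>\<omega>. Xe2e tm tb tmsg tcut \<omega> \<partial>stream_space (measure_pmf (pair_pmf qm (pair_pmf qm qb))))
           = (E {\<omega>. \<not> Yr tm tb tcut \<omega>} + E {\<omega>. Yr tm tb tcut \<omega>}) / p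
    \<and> E {\<omega>. Yr tm tb tcut \<omega>} = 2 * E (Ap L1) + E (Ap Lb) - E (Ap L1 \<inter> Ap L2) - 2 * E (Ap L1 \<inter> Ap Lb)
                    + E (Ap L1 \<inter> Ap L2 \<inter> Ap Lb)
    \<and> E {\<omega>. \<not> Yr tm tb tcut \<omega>} = 2 * (E (Amm L1 L2) + E (Amm L1 Lb) + E (Amm Lb L1))
                    - 2 * E (Amm L1 L2 \<inter> Amm L1 Lb) - E (Amm Lb L1 \<inter> Amm Lb L2)
                    - E (Am L1 \<inter> Am L2) - 2 * E (Am L1 \<inter> Am Lb)"
proof -
  define P where "P = pair_pmf qm (pair_pmf qm qb)"
  define Z where "Z = Zr tm tb tmsg tcut"
  have iqm: "integrable qm real" using geom_shift assms(4,5,8) by blast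
  have iqb: "integrable qb real" using geom_shift assms(6,7,9) by blast
  have Zint: "integrable P Z" unfolding P_def Z_def by (rule Zr_integrable[OF iqm iqb])
  have intA: "integrable P (\<lambda>\<omega>. Z \<omega> * indicator A \<omega>)" for A
    by (rule Bochner_Integration.integrable_bound[OF Zint])
      (auto intro!: always_eventually simp: indicator_def Z_def Zr_nonneg)
  have Edef: "E A = (\<integral>\<omega>. Z \<omega> * indicator A \<omega> \<partial>P)" for A
    unfolding E_def P_def Z_def ..
  have Esym: "E A = E (sw -` A)" for A
    unfolding E_def by (rule sym_E)
  have tc0: "tcut > 0" using assms(3) by simp
  have "E {\<omega>. Yr tm tb tcut \<omega>} = E (Ap L1) + E (Ap L2) + E (Ap Lb) - E (Ap L1 \<inter> Ap L2)
      - E (Ap L1 \<inter> Ap Lb) - E (Ap L2 \<inter> Ap Lb) + E (Ap L1 \<inter> Ap L2 \<inter> Ap Lb)"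
    unfolding Edef Ap_def
    by (subst ind2) (simp add: ring_distribs intA Bochner_Integration.integrable_add
        Bochner_Integration.integrable_diff)
  moreover have "E (Ap L2) = E (Ap L1)"
    using Esym[of "Ap L2"] unfolding Ap_def by (simp add: Aplus_sw)
  moreover have "E (Ap L2 \<inter> Ap Lb) = E (Ap L1 \<inter> Ap Lb)"
    using Esym[of "Ap L2 \<inter> Ap Lb"] unfolding Ap_def by (simp add: Aplus_sw vimage_Int)
  ultimately have part2: "E {\<omega>. Yr tm tb tcut \<omega>} = 2 * E (Ap L1) + E (Ap Lb) - E (Ap L1 \<inter> Ap L2) - 2 * E (Ap L1 \<inter> Ap Lb)
                    + E (Ap L1 \<inter> Ap L2 \<inter> Ap Lb)" by simp
  have "E {\<omega>. \<not> Yr tm tb tcut \<omega>} = E (Amm L1 L2) + E (Amm L2 L1) + E (Amm L1 Lb) + E (Amm L2 Lb)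
      + E (Amm Lb L1) + E (Amm Lb L2) - E (Amm L1 L2 \<inter> Amm L1 Lb) - E (Amm L2 L1 \<inter> Amm L2 Lb)
      - E (Amm Lb L1 \<inter> Amm Lb L2) - E (Am L1 \<inter> Am L2) - E (Am L1 \<inter> Am Lb) - E (Am L2 \<inter> Am Lb)"
    unfolding Edef Amm_def Am_def
    by (subst ind3[OF tc0]) (simp add: ring_distribs intA Bochner_Integration.integrable_add
        Bochner_Integration.integrable_diff)
  moreover have "E (Amm L2 L1) = E (Amm L1 L2)"
    using Esym[of "Amm L2 L1"] unfolding Amm_def by (simp add: Aminus2_sw)
  moreover have "E (Amm L2 Lb) = E (Amm L1 Lb)"
    using Esym[of "Amm L2 Lb"] unfolding Amm_def by (simp add: Aminus2_sw)
  moreover have "E (Amm Lb L2) = E (Amm Lb L1)"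
    using Esym[of "Amm Lb L2"] unfolding Amm_def by (simp add: Aminus2_sw)
  moreover have "E (Amm L2 L1 \<inter> Amm L2 Lb) = E (Amm L1 L2 \<inter> Amm L1 Lb)"
    using Esym[of "Amm L2 L1 \<inter> Amm L2 Lb"] unfolding Amm_def by (simp add: Aminus2_sw vimage_Int)
  moreover have "E (Am L2 \<inter> Am Lb) = E (Am L1 \<inter> Am Lb)"
    using Esym[of "Am L2 \<inter> Am Lb"] unfolding Am_def by (simp add: Aminus_sw vimage_Int)
  ultimately have part3: "E {\<omega>. \<not> Yr tm tb tcut \<omega>} = 2 * (E (Amm L1 L2) + E (Amm L1 Lb) + E (Amm Lb L1))
                    - 2 * E (Amm L1 L2 \<inter> Amm L1 Lb) - E (Amm Lb L1 \<inter> Amm Lb L2)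
                    - E (Am L1 \<inter> Am L2) - 2 * E (Am L1 \<inter> Am Lb)" by simp
  have Y111: "Yr tm tb tcut (1, 1, 1)"
  proof -
    have "real tcut > real tm" "real tcut > real tb" using assms(3) by auto
    then show ?thesis by (auto simp: Yr_def Xmax_def Xmin_def Xl_def max_def min_def)
  qed
  have "pmf P (1, 1, 1) = pm * (pm * pb)"
    unfolding P_def by (simp add: pmf_pair assms(8,9))
  then have "pmf P (1, 1, 1) > 0" using assms(4,6) by simp
  moreover have "pmf P (1, 1, 1) \<le> measure_pmf.prob P {\<omega>. Yr tm tb tcut \<omega>}"
    using measure_pmf.finite_measure_mono[of "{(1,1,1)}" "{\<omega>. Yr tm tb tcut \<omega>}" P] Y111
    by (simp add: measure_pmf_single)
  ultimately have ppos: "measure_pmf.prob P {\<omega>. Yr tm tb tcut \<omega>} > 0" by linarith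
  have EZ: "(\<integral>x. Z x \<partial>P) = E {\<omega>. \<not> Yr tm tb tcut \<omega>} + E {\<omega>. Yr tm tb tcut \<omega>}"
  proof -
    have "(\<integral>x. Z x \<partial>P) = (\<integral>x. Z x * indicator {\<omega>. \<not> Yr tm tb tcut \<omega>} x + Z x * indicator {\<omega>. Yr tm tb tcut \<omega>} x \<partial>P)"
      by (rule Bochner_Integration.integral_cong) (auto simp: indicator_def)
    also have "\<dots> = E {\<omega>. \<not> Yr tm tb tcut \<omega>} + E {\<omega>. Yr tm tb tcut \<omega>}"
      unfolding Edef by (rule Bochner_Integration.integral_add[OF intA intA])
    finally show ?thesis .
  qed
  have part1: "(\<integral>\<omega>. Xe2e tm tb tmsg tcut \<omega> \<partial>stream_space (measure_pmf (pair_pmf qm (pair_pmf qm qb))))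
           = (E {\<omega>. \<not> Yr tm tb tcut \<omega>} + E {\<omega>. Yr tm tb tcut \<omega>}) / p"
  proof -
    have "(\<integral>\<omega>. Xe2e tm tb tmsg tcut \<omega> \<partial>stream_space (measure_pmf P)) = (\<integral>x. Z x \<partial>P) / measure_pmf.prob P {\<omega>. Yr tm tb tcut \<omega>}"
      using renewal[of Z P "Yr tm tb tcut", OF _ Zint ppos]
      unfolding Xe2e_def first_success_def Z_def by (simp add: Zr_nonneg)
    then show ?thesis using EZ unfolding p_def P_def by simp
  qed
  show ?thesis using part1 part2 part3 by blast
qed

end
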